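(* Let $M$ be a matroid with lattice of flats $L$ and rank function giving $r_{FG}=\operatorname{rk}G-\operatorname{rk}F$, and consider the weakly ranked poset $(L,2r)$. Define $\kappa\in\mathscr{I}(L,2r)$ by $$\kappa_{FH}(t):=(t-1)^{r_{FH}}\sum_{F\le G\le H}(-1)^{r_{FG}}\chi_{FG}(-1)\chi_{GH}(t),$$ and $h^{\mathrm{bc}}\in\mathscr{I}_{1/2}(L,2r)$ by $h^{\mathrm{bc}}_{FG}(t):=(-t)^{r_{FG}}\chi_{FG}(1-t^{-1})$. Then $\kappa$ is an $(L,2r)$-kernel, and $h^{\mathrm{bc}}$ is its left KLS-function.
   Context: For a locally finite poset $P$ with weak rank function $\rho$ (integers $\rho_{xy}$ for $x\le y$, positive for $x<y$, additive: $\rho_{xy}+\rho_{yz}=\rho_{xz}$): $I(P)=\prod_{x\le y}\mathbb{Z}[t]$ is a ring under convolution $(fg)_{xz}=\sum_{x\le y\le z}f_{xy}g_{yz}$; $\mathscr{I}(P,\rho)$ is the subring of $f$ with $\deg f_{xy}\le\rho_{xy}$, with involution $\bar f_{xy}(t)=t^{\rho_{xy}}f_{xy}(t^{-1})$; $\mathscr{I}_{1/2}(P,\rho)$ consists of $f\in\mathscr{I}(P,\rho)$ with $f_{xx}=1$ and $\deg f_{xy}<\rho_{xy}/2$ for $x<y$. A $(P,\rho)$-kernel is $\kappa\in\mathscr{I}(P,\rho)$ with $\kappa_{xx}=1$ and $\kappa^{-1}=\bar\kappa$; its left KLS-function is the unique $g\in\mathscr{I}_{1/2}(P,\rho)$ with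 $\bar g=g\kappa$. Here $(L,2r)$ means $L$ (ordered by inclusion) with weak rank function $\rho=2r$. The characteristic function is $\chi_{FG}(t)=\sum_{F\le E\le G}\mu_{FE}\,t^{r_{EG}}$, where $\mu$ is the Möbius function of $L$ (the inverse in $I(L)$ of the all-ones function $\zeta$). *)

theory Defs
  imports "HOL-Computational_Algebra.Polynomial"
begin

definition matroid :: "'a set \<Rightarrow> ('a set \<Rightarrow> bool) \<Rightarrow> bool" where
  "matroid E indep \<longleftrightarrow> finite E
     \<and> (\<forall>I. indep I \<longrightarrow> I \<subseteq> E)
     \<and> indep {}
     \<and> (\<forall>I J. indep J \<and> I \<subseteq> J \<longrightarrow> indep I)
     \<and> (\<forall>I J. indep I \<and> indep J \<and> card I < card J \<longrightarrow> (\<exists>e\<in>J - I. indep (insert e I)))"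

definition mrank :: "('a set \<Rightarrow> bool) \<Rightarrow> 'a set \<Rightarrow> nat" where
  "mrank indep X = Max (card ` {I. I \<subseteq> X \<and> indep I})"

definition flats :: "'a set \<Rightarrow> ('a set \<Rightarrow> bool) \<Rightarrow> 'a set set" where
  "flats E indep = {F. F \<subseteq> E \<and> (\<forall>e\<in>E - F. mrank indep F < mrank indep (insert e F))}"

definition rr :: "('a set \<Rightarrow> bool) \<Rightarrow> 'a set \<Rightarrow> 'a set \<Rightarrow> nat" where
  "rr indep F G = mrank indep G - mrank indep F"

definition intv :: "'b set set \<Rightarrow> 'b set \<Rightarrow> 'b set \<Rightarrow> 'b set set" where
  "intv S x y = {z \<in> S. x \<subseteq> z \<and> z \<subseteq> y}"

definition rel :: "'b set set \<Rightarrow> 'b set \<Rightarrow> 'b set \<Rightarrow> bool" where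
  "rel S x y \<longleftrightarrow> x \<in> S \<and> y \<in> S \<and> x \<subseteq> y"

definition incalg :: "'b set set \<Rightarrow> ('b set \<Rightarrow> 'b set \<Rightarrow> 'c::comm_ring_1) set" where
  "incalg S = {f. \<forall>x y. \<not> rel S x y \<longrightarrow> f x y = 0}"

definition conv :: "'b set set \<Rightarrow> ('b set \<Rightarrow> 'b set \<Rightarrow> 'c::comm_ring_1)
    \<Rightarrow> ('b set \<Rightarrow> 'b set \<Rightarrow> 'c) \<Rightarrow> ('b set \<Rightarrow> 'b set \<Rightarrow> 'c)" where
  "conv S f g = (\<lambda>x z. if rel S x z then (\<Sum>y\<in>intv S x z. f x y * g y z) else 0)"

definition delta :: "'b set set \<Rightarrow> 'b set \<Rightarrow> 'b set \<Rightarrow> 'c::comm_ring_1" where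
  "delta S = (\<lambda>x y. if x \<in> S \<and> y = x then 1 else 0)"

definition zeta :: "'b set set \<Rightarrow> 'b set \<Rightarrow> 'b set \<Rightarrow> 'c::comm_ring_1" where
  "zeta S = (\<lambda>x y. if rel S x y then 1 else 0)"

definition mobius :: "'b set set \<Rightarrow> 'b set \<Rightarrow> 'b set \<Rightarrow> 'c::comm_ring_1" where
  "mobius S = (THE m. m \<in> incalg S \<and> conv S m (zeta S) = delta S \<and> conv S (zeta S) m = delta S)"

text \<open>bar_poly n p = t^n p(t^{-1}) (for degree p \<le> n).\<close>
definition bar_poly :: "nat \<Rightarrow> 'c::comm_ring_1 poly \<Rightarrow> 'c poly" where
  "bar_poly n p = (\<Sum>i\<le>n. monom (coeff p (n - i)) i)"

definition bar :: "'b set set \<Rightarrow> ('b set \<Rightarrow> 'b set \<Rightarrow> nat)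
    \<Rightarrow> ('b set \<Rightarrow> 'b set \<Rightarrow> int poly) \<Rightarrow> ('b set \<Rightarrow> 'b set \<Rightarrow> int poly)" where
  "bar S rho f = (\<lambda>x y. if rel S x y then bar_poly (rho x y) (f x y) else 0)"

definition I_rho :: "'b set set \<Rightarrow> ('b set \<Rightarrow> 'b set \<Rightarrow> nat)
    \<Rightarrow> ('b set \<Rightarrow> 'b set \<Rightarrow> int poly) set" where
  "I_rho S rho = {f \<in> incalg S. \<forall>x y. rel S x y \<longrightarrow> degree (f x y) \<le> rho x y}"

definition I_half :: "'b set set \<Rightarrow> ('b set \<Rightarrow> 'b set \<Rightarrow> nat)
    \<Rightarrow> ('b set \<Rightarrow> 'b set \<Rightarrow> int poly) set" where
  "I_half S rho = {f \<in> I_rho S rho. (\<forall>x\<in>S. f x x = 1)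
      \<and> (\<forall>x y. rel S x y \<and> x \<noteq> y \<longrightarrow> 2 * degree (f x y) < rho x y)}"

definition is_kernel :: "'b set set \<Rightarrow> ('b set \<Rightarrow> 'b set \<Rightarrow> nat)
    \<Rightarrow> ('b set \<Rightarrow> 'b set \<Rightarrow> int poly) \<Rightarrow> bool" where
  "is_kernel S rho \<kappa> \<longleftrightarrow> \<kappa> \<in> I_rho S rho \<and> (\<forall>x\<in>S. \<kappa> x x = 1)
     \<and> conv S \<kappa> (bar S rho \<kappa>) = delta S \<and> conv S (bar S rho \<kappa>) \<kappa> = delta S"

definition is_left_KLS :: "'b set set \<Rightarrow> ('b set \<Rightarrow> 'b set \<Rightarrow> nat)
    \<Rightarrow> ('b set \<Rightarrow> 'b set \<Rightarrow> int poly) \<Rightarrow> ('b set \<Rightarrow> 'b set \<Rightarrow> int poly) \<Rightarrow> bool" where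
  "is_left_KLS S rho \<kappa> g \<longleftrightarrow> g \<in> I_half S rho \<and> bar S rho g = conv S g \<kappa>
     \<and> (\<forall>g'. g' \<in> I_half S rho \<and> bar S rho g' = conv S g' \<kappa> \<longrightarrow> g' = g)"

definition chi :: "'a set \<Rightarrow> ('a set \<Rightarrow> bool) \<Rightarrow> 'a set \<Rightarrow> 'a set \<Rightarrow> int poly" where
  "chi E indep F G = (\<Sum>H\<in>intv (flats E indep) F G.
       mobius (flats E indep) F H * [:0, 1:] ^ rr indep H G)"

definition kappaM :: "'a set \<Rightarrow> ('a set \<Rightarrow> bool) \<Rightarrow> 'a set \<Rightarrow> 'a set \<Rightarrow> int poly" where
  "kappaM E indep F H = (if rel (flats E indep) F H then
       [:-1, 1:] ^ rr indep F H *
       (\<Sum>G\<in>intv (flats E indep) F H.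
          smult ((-1) ^ rr indep F G * poly (chi E indep F G) (-1)) (chi E indep G H))
     else 0)"

text \<open>h^bc_{FG}(t) = (-t)^{r_{FG}} chi_{FG}(1 - t^{-1})
   = (-1)^{r_{FG}} * t^{r_{FG}} * (chi_{FG} o (1 - s))(t^{-1}).\<close>
definition hbc :: "'a set \<Rightarrow> ('a set \<Rightarrow> bool) \<Rightarrow> 'a set \<Rightarrow> 'a set \<Rightarrow> int poly" where
  "hbc E indep F G = (if rel (flats E indep) F G then
       smult ((-1) ^ rr indep F G)
         (bar_poly (rr indep F G) (pcompose (chi E indep F G) [:1, -1:]))
     else 0)"

end

theory Submission
  imports Defs
begin



lemma intv_finite: "finite S \<Longrightarrow> finite (intv S x y)"
  by (simp add: intv_def)

lemma conv_assoc:
  assumes "finite S"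
  shows "conv S (conv S f g) h = conv S f (conv S g h)"
proof (intro ext)
  fix x w
  show "conv S (conv S f g) h x w = conv S f (conv S g h) x w"
  proof (cases "rel S x w")
    case False thus ?thesis by (simp add: conv_def)
  next
    case True
    have "conv S (conv S f g) h x w = (\<Sum>y\<in>intv S x w. (\<Sum>z\<in>{z\<in>intv S x w. z \<subseteq> y}. f x z * g z y) * h y w)"
    proof -
      have "\<And>y. y \<in> intv S x w \<Longrightarrow> conv S f g x y = (\<Sum>z\<in>{z\<in>intv S x w. z \<subseteq> y}. f x z * g z y)"
      proof -
        fix y assume y: "y \<in> intv S x w"
        have "intv S x y = {z\<in>intv S x w. z \<subseteq> y}" using y by (auto simp: intv_def)
        moreover have "rel S x y" using y True by (auto simp: intv_def rel_def)
        ultimately show "conv S f g x y = (\<Sum>z\<in>{z\<in>intv S x w. z \<subseteq> y}. f x z * g z y)"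
          by (simp add: conv_def)
      qed
      thus ?thesis using True by (simp add: conv_def)
    qed
    also have "\<dots> = (\<Sum>y\<in>intv S x w. \<Sum>z\<in>{z\<in>intv S x w. z \<subseteq> y}. f x z * g z y * h y w)"
      by (simp add: sum_distrib_right)
    also have "\<dots> = (\<Sum>z\<in>intv S x w. \<Sum>y\<in>{y\<in>intv S x w. z \<subseteq> y}. f x z * g z y * h y w)"
      by (rule sum.swap_restrict) (use assms in \<open>simp_all add: intv_finite\<close>)
    also have "\<dots> = (\<Sum>z\<in>intv S x w. f x z * (\<Sum>y\<in>{y\<in>intv S x w. z \<subseteq> y}. g z y * h y w))"
      by (simp add: sum_distrib_left mult.assoc)
    also have "\<dots> = conv S f (conv S g h) x w"
    proof -
      have "\<And>z. z \<in> intv S x w \<Longrightarrow> conv S g h z w = (\<Sum>y\<in>{y\<in>intv S x w. z \<subseteq> y}. g z y * h y w)"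
      proof -
        fix z assume z: "z \<in> intv S x w"
        have "intv S z w = {y\<in>intv S x w. z \<subseteq> y}" using z by (auto simp: intv_def)
        moreover have "rel S z w" using z True by (auto simp: intv_def rel_def)
        ultimately show "conv S g h z w = (\<Sum>y\<in>{y\<in>intv S x w. z \<subseteq> y}. g z y * h y w)"
          by (simp add: conv_def)
      qed
      thus ?thesis using True by (simp add: conv_def)
    qed
    finally show ?thesis .
  qed
qed

lemma conv_delta_right:
  assumes "f \<in> incalg S" "finite S"
  shows "conv S f (delta S) = f"
proof (intro ext)
  fix x z
  show "conv S f (delta S) x z = f x z"
  proof (cases "rel S x z")
    case False thus ?thesis using assms by (simp add: conv_def incalg_def)
  next
    case True
    have "(\<Sum>y\<in>intv S x z. f x y * delta S y z) = (\<Sum>y\<in>intv S x z. if y = z then f x y else 0)"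
      by (rule sum.cong) (auto simp: delta_def intv_def)
    also have "\<dots> = f x z" using True assms(2) by (simp add: intv_def rel_def sum.delta)
    finally show ?thesis using True by (simp add: conv_def)
  qed
qed

lemma conv_delta_left:
  assumes "f \<in> incalg S" "finite S"
  shows "conv S (delta S) f = f"
proof (intro ext)
  fix x z
  show "conv S (delta S) f x z = f x z"
  proof (cases "rel S x z")
    case False thus ?thesis using assms by (simp add: conv_def incalg_def)
  next
    case True
    have "(\<Sum>y\<in>intv S x z. delta S x y * f y z) = (\<Sum>y\<in>intv S x z. if y = x then f y z else 0)"
      by (rule sum.cong) (auto simp: delta_def intv_def rel_def)
    also have "\<dots> = f x z" using True assms(2) by (simp add: intv_def rel_def sum.delta')
    finally show ?thesis using True by (simp add: conv_def)
  qed
qed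

lemma conv_incalg: "conv S f g \<in> incalg S"
  by (simp add: conv_def incalg_def)
lemma delta_incalg: "delta S \<in> incalg S"
  by (simp add: delta_def incalg_def rel_def)
lemma zeta_incalg: "zeta S \<in> incalg S"
  by (simp add: zeta_def incalg_def)




function mul :: "'b set set \<Rightarrow> 'b set \<Rightarrow> 'b set \<Rightarrow> int" where
  "mul S x y = (if x = y then 1 else if finite y then - (\<Sum>z\<in>{z\<in>S. x \<subseteq> z \<and> z \<subset> y}. mul S x z) else 0)"
  by auto
termination
  by (relation "inv_image finite_psubset (\<lambda>(S,x,y). y)") auto

function mur :: "'b set set \<Rightarrow> 'b set \<Rightarrow> 'b set \<Rightarrow> int" where
  "mur S x y = (if x = y then 1 else if finite y \<and> x \<subseteq> y then - (\<Sum>z\<in>{z\<in>S. x \<subset> z \<and> z \<subseteq> y}. mur S z y) else 0)"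
  by auto
termination
  by (relation "measure (\<lambda>(S,x,y). card (y - x))") (auto intro!: psubset_card_mono)

declare mul.simps[simp del] mur.simps[simp del]

definition mlf :: "'b set set \<Rightarrow> 'b set \<Rightarrow> 'b set \<Rightarrow> 'c::comm_ring_1" where
  "mlf S x y = (if rel S x y then of_int (mul S x y) else 0)"
definition mrf :: "'b set set \<Rightarrow> 'b set \<Rightarrow> 'b set \<Rightarrow> 'c::comm_ring_1" where
  "mrf S x y = (if rel S x y then of_int (mur S x y) else 0)"

lemma mlf_left:
  assumes "finite S" "\<forall>y\<in>S. finite y"
  shows "conv S (mlf S) (zeta S) = (delta S :: _ \<Rightarrow> _ \<Rightarrow> 'c::comm_ring_1)"
proof (intro ext)
  fix x y
  show "conv S (mlf S) (zeta S) x y = (delta S x y :: 'c)"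
  proof (cases "rel S x y")
    case False thus ?thesis by (auto simp: conv_def delta_def rel_def)
  next
    case True
    have "conv S (mlf S) (zeta S) x y = (\<Sum>z\<in>intv S x y. (of_int (mul S x z) :: 'c))"
      using True by (auto simp: conv_def mlf_def zeta_def intv_def rel_def intro!: sum.cong)
    also have "\<dots> = of_int (\<Sum>z\<in>intv S x y. mul S x z)" by simp
    also have "(\<Sum>z\<in>intv S x y. mul S x z) = (if x = y then 1 else 0)"
    proof (cases "x = y")
      case True2: True
      have "intv S x y = {x}" using True True2 by (auto simp: intv_def rel_def)
      thus ?thesis using True2 by (simp add: mul.simps)
    next
      case False
      have fy: "finite y" using True assms by (auto simp: rel_def)
      have eq: "intv S x y = insert y {z\<in>S. x \<subseteq> z \<and> z \<subset> y}" using True by (auto simp: intv_def rel_def)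
      have "(\<Sum>z\<in>intv S x y. mul S x z) = mul S x y + (\<Sum>z\<in>{z\<in>S. x \<subseteq> z \<and> z \<subset> y}. mul S x z)"
        unfolding eq by (subst sum.insert) (use assms in auto)
      also have "\<dots> = 0" using False fy by (subst (1) mul.simps) simp
      finally show ?thesis using False by simp
    qed
    finally show ?thesis using True by (auto simp: delta_def rel_def)
  qed
qed

lemma mrf_right:
  assumes "finite S" "\<forall>y\<in>S. finite y"
  shows "conv S (zeta S) (mrf S) = (delta S :: _ \<Rightarrow> _ \<Rightarrow> 'c::comm_ring_1)"
proof (intro ext)
  fix x y
  show "conv S (zeta S) (mrf S) x y = (delta S x y :: 'c)"
  proof (cases "rel S x y")
    case False thus ?thesis by (auto simp: conv_def delta_def rel_def)
  next
    case True
    have "conv S (zeta S) (mrf S) x y = (\<Sum>z\<in>intv S x y. (of_int (mur S z y) :: 'c))"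
      using True by (auto simp: conv_def mrf_def zeta_def intv_def rel_def intro!: sum.cong)
    also have "\<dots> = of_int (\<Sum>z\<in>intv S x y. mur S z y)" by simp
    also have "(\<Sum>z\<in>intv S x y. mur S z y) = (if x = y then 1 else 0)"
    proof (cases "x = y")
      case True2: True
      have "intv S x y = {x}" using True True2 by (auto simp: intv_def rel_def)
      thus ?thesis using True2 by (simp add: mur.simps)
    next
      case False
      have fy: "finite y" "x \<subseteq> y" using True assms by (auto simp: rel_def)
      have eq: "intv S x y = insert x {z\<in>S. x \<subset> z \<and> z \<subseteq> y}" using True by (auto simp: intv_def rel_def)
      have "(\<Sum>z\<in>intv S x y. mur S z y) = mur S x y + (\<Sum>z\<in>{z\<in>S. x \<subset> z \<and> z \<subseteq> y}. mur S z y)"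
        unfolding eq by (subst sum.insert) (use assms in auto)
      also have "\<dots> = 0" using False fy by (subst (1) mur.simps) simp
      finally show ?thesis using False by simp
    qed
    finally show ?thesis using True by (auto simp: delta_def rel_def)
  qed
qed

lemma mlf_incalg: "mlf S \<in> incalg S" by (simp add: mlf_def incalg_def)
lemma mrf_incalg: "mrf S \<in> incalg S" by (simp add: mrf_def incalg_def)

lemma mobius_aux:
  assumes "finite S" "\<forall>y\<in>S. finite y"
  shows "(mlf S :: _ \<Rightarrow> _ \<Rightarrow> 'c::comm_ring_1) = mrf S"
proof -
  have R: "conv S (zeta S) (mrf S) = (delta S :: _ \<Rightarrow> _ \<Rightarrow> 'c)" by (rule mrf_right[OF assms])
  have L: "conv S (mlf S) (zeta S) = (delta S :: _ \<Rightarrow> _ \<Rightarrow> 'c)" by (rule mlf_left[OF assms])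
  have d1: "conv S (mlf S) (delta S) = (mlf S :: _ \<Rightarrow> _ \<Rightarrow> 'c)" by (rule conv_delta_right[OF mlf_incalg assms(1)])
  have d2: "conv S (delta S) (mrf S) = (mrf S :: _ \<Rightarrow> _ \<Rightarrow> 'c)" by (rule conv_delta_left[OF mrf_incalg assms(1)])
  have "(mlf S :: _ \<Rightarrow> _ \<Rightarrow> 'c) = conv S (mlf S) (conv S (zeta S) (mrf S))"
    using R d1 by simp
  also have "\<dots> = conv S (conv S (mlf S) (zeta S)) (mrf S)" by (simp add: conv_assoc assms)
  also have "\<dots> = mrf S" using L d2 by simp
  finally show ?thesis .
qed

lemma mobius_eq:
  assumes "finite S" "\<forall>y\<in>S. finite y"
  shows "mobius S = (mlf S :: _ \<Rightarrow> _ \<Rightarrow> 'c::comm_ring_1)"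
proof -
  have L: "conv S (mlf S) (zeta S) = (delta S :: _ \<Rightarrow> _ \<Rightarrow> 'c)" by (rule mlf_left[OF assms])
  have R: "conv S (zeta S) (mrf S) = (delta S :: _ \<Rightarrow> _ \<Rightarrow> 'c)" by (rule mrf_right[OF assms])
  have eq: "(mlf S :: _ \<Rightarrow> _ \<Rightarrow> 'c) = mrf S" by (rule mobius_aux[OF assms])
  have R2: "conv S (zeta S) (mlf S) = (delta S :: _ \<Rightarrow> _ \<Rightarrow> 'c)" using R eq by simp
  have d2: "conv S (delta S) (mlf S) = (mlf S :: _ \<Rightarrow> _ \<Rightarrow> 'c)" by (rule conv_delta_left[OF mlf_incalg assms(1)])
  show ?thesis unfolding mobius_def
  proof (rule the_equality)
    show "(mlf S :: _ \<Rightarrow> _ \<Rightarrow> 'c) \<in> incalg S \<and> conv S (mlf S :: _ \<Rightarrow> _ \<Rightarrow> 'c) (zeta S) = delta S \<and> conv S (zeta S) (mlf S :: _ \<Rightarrow> _ \<Rightarrow> 'c) = (delta S :: _ \<Rightarrow> _ \<Rightarrow> 'c)"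
      by (intro conjI L R2 mlf_incalg)
  next
    fix m :: "_ \<Rightarrow> _ \<Rightarrow> 'c"
    assume m: "m \<in> incalg S \<and> conv S m (zeta S) = delta S \<and> conv S (zeta S) m = delta S"
    have "m = conv S m (conv S (zeta S) (mlf S))"
      using R2 conv_delta_right[of m S] m assms(1) by simp
    also have "\<dots> = conv S (conv S m (zeta S)) (mlf S)" by (simp add: conv_assoc assms)
    also have "\<dots> = mlf S" using m d2 by simp
    finally show "m = mlf S" .
  qed
qed

lemma mobius_left:
  assumes "finite S" "\<forall>y\<in>S. finite y"
  shows "conv S (mobius S) (zeta S) = (delta S :: _ \<Rightarrow> _ \<Rightarrow> 'c::comm_ring_1)"
proof -
  have "mobius S = (mlf S :: _ \<Rightarrow> _ \<Rightarrow> 'c)" by (rule mobius_eq[OF assms])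
  moreover have "conv S (mlf S) (zeta S) = (delta S :: _ \<Rightarrow> _ \<Rightarrow> 'c)" by (rule mlf_left[OF assms])
  ultimately show ?thesis by simp
qed

lemma mobius_right:
  assumes "finite S" "\<forall>y\<in>S. finite y"
  shows "conv S (zeta S) (mobius S) = (delta S :: _ \<Rightarrow> _ \<Rightarrow> 'c::comm_ring_1)"
proof -
  have "mobius S = (mlf S :: _ \<Rightarrow> _ \<Rightarrow> 'c)" by (rule mobius_eq[OF assms])
  moreover have "(mlf S :: _ \<Rightarrow> _ \<Rightarrow> 'c) = mrf S" by (rule mobius_aux[OF assms])
  moreover have "conv S (zeta S) (mrf S) = (delta S :: _ \<Rightarrow> _ \<Rightarrow> 'c)" by (rule mrf_right[OF assms])
  ultimately show ?thesis by simp
qed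




lemma coeff_bar_poly: "coeff (bar_poly n p) i = (if i \<le> n then coeff p (n - i) else 0)"
  by (simp add: bar_poly_def coeff_sum coeff_monom sum.delta)

lemma degree_bar_poly: "degree (bar_poly n p) \<le> n"
  by (rule degree_le) (simp add: coeff_bar_poly)

lemma bar_poly_add: "bar_poly n (p + q) = bar_poly n p + bar_poly n q"
  by (rule poly_eqI) (simp add: coeff_bar_poly)

lemma bar_poly_diff: "bar_poly n (p - q) = bar_poly n p - bar_poly n q"
  by (rule poly_eqI) (simp add: coeff_bar_poly)

lemma bar_poly_0[simp]: "bar_poly n 0 = 0"
  by (rule poly_eqI) (simp add: coeff_bar_poly)

lemma bar_poly_sum: "bar_poly n (\<Sum>i\<in>A. f i) = (\<Sum>i\<in>A. bar_poly n (f i))"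
  by (rule poly_eqI) (simp add: coeff_bar_poly coeff_sum)

lemma bar_poly_monom: "j \<le> n \<Longrightarrow> bar_poly n (monom c j) = monom c (n - j)"
  by (rule poly_eqI) (auto simp add: coeff_bar_poly coeff_monom)

lemma bar_poly_mult:
  fixes p q :: "'c::comm_ring_1 poly"
  assumes "degree p \<le> n" "degree q \<le> m"
  shows "bar_poly (n + m) (p * q) = bar_poly n p * bar_poly m q"
proof -
  have "p * q = (\<Sum>i\<le>n. monom (coeff p i) i) * (\<Sum>j\<le>m. monom (coeff q j) j)"
    using poly_as_sum_of_monoms'[OF assms(1)] poly_as_sum_of_monoms'[OF assms(2)] by simp
  also have "\<dots> = (\<Sum>i\<le>n. \<Sum>j\<le>m. monom (coeff p i * coeff q j) (i + j))"
    by (simp add: sum_product mult_monom)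
  finally have "bar_poly (n + m) (p * q) = (\<Sum>i\<le>n. \<Sum>j\<le>m. monom (coeff p i * coeff q j) (n + m - (i + j)))"
    by (simp add: bar_poly_sum bar_poly_monom)
  also have "\<dots> = (\<Sum>i\<le>n. \<Sum>j\<le>m. monom (coeff p i) (n - i) * monom (coeff q j) (m - j))"
    by (intro sum.cong refl) (simp add: mult_monom)
  also have "\<dots> = (\<Sum>i\<le>n. bar_poly n (monom (coeff p i) i)) * (\<Sum>j\<le>m. bar_poly m (monom (coeff q j) j))"
    by (simp add: sum_product bar_poly_monom)
  also have "\<dots> = bar_poly n p * bar_poly m q"
    using poly_as_sum_of_monoms'[OF assms(1)] poly_as_sum_of_monoms'[OF assms(2)]
    by (simp add: bar_poly_sum[symmetric])
  finally show ?thesis .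
qed

lemma bar_poly_power:
  fixes a :: "'c::comm_ring_1 poly"
  assumes "degree a \<le> n"
  shows "bar_poly (n * k) (a ^ k) = bar_poly n a ^ k"
proof (induction k)
  case 0 thus ?case by (simp add: bar_poly_def)
next
  case (Suc k)
  have "bar_poly (n * Suc k) (a ^ Suc k) = bar_poly (n + n * k) (a * a ^ k)" by simp
  also have "\<dots> = bar_poly n a * bar_poly (n*k) (a ^ k)"
    by (rule bar_poly_mult) (use assms in \<open>auto intro: order.trans[OF degree_power_le]\<close>)
  finally show ?case using Suc by simp
qed

lemma bar_poly_const: "bar_poly n [:c:] = smult c ([:0,1:] ^ n)"
  using bar_poly_monom[of 0 n c] by (simp add: monom_altdef monom_0)

lemma bar_poly_0_const: "degree p = 0 \<Longrightarrow> bar_poly 0 p = p"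
  using bar_poly_const[of 0 "coeff p 0"] degree_0_id[of p] by simp

lemma bp1: "bar_poly 2 [:1,-1:] = ([:0,-1,1:] :: int poly)"
  by (rule poly_eqI) (simp add: coeff_bar_poly coeff_pCons split: nat.splits)
lemma bp2: "bar_poly 2 [:0,-1,1:] = ([:1,-1:] :: int poly)"
  by (rule poly_eqI) (simp add: coeff_bar_poly coeff_pCons split: nat.splits)
lemma bp3: "bar_poly 2 [:0,-1:] = ([:0,-1:] :: int poly)"
  by (rule poly_eqI) (simp add: coeff_bar_poly coeff_pCons split: nat.splits)
lemma bp4: "bar_poly 1 [:1,-1:] = ([:-1,1:] :: int poly)"
  by (rule poly_eqI) (simp add: coeff_bar_poly coeff_pCons split: nat.splits)




definition dsc :: "('b set \<Rightarrow> 'b set \<Rightarrow> nat) \<Rightarrow> 'c::comm_ring_1 \<Rightarrow> ('b set \<Rightarrow> 'b set \<Rightarrow> 'c) \<Rightarrow> ('b set \<Rightarrow> 'b set \<Rightarrow> 'c)" where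
  "dsc r a f = (\<lambda>x y. a ^ r x y * f x y)"

lemma dsc_dsc: "dsc r a (dsc r b f) = dsc r (a * b) f"
  by (simp add: dsc_def power_mult_distrib mult.assoc)

lemma dsc_one: "dsc r 1 f = f"
  by (simp add: dsc_def)

lemma dsc_incalg: "f \<in> incalg S \<Longrightarrow> dsc r a f \<in> incalg S"
  by (simp add: dsc_def incalg_def)

lemma conv_dsc:
  assumes add: "\<And>x y z. rel S x y \<Longrightarrow> rel S y z \<Longrightarrow> r x z = r x y + r y z"
  shows "conv S (dsc r a f) (dsc r a g) = dsc r a (conv S f g)"
proof (intro ext)
  fix x z
  show "conv S (dsc r a f) (dsc r a g) x z = dsc r a (conv S f g) x z"
  proof (cases "rel S x z")
    case False thus ?thesis by (simp add: conv_def dsc_def)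
  next
    case True
    have "(\<Sum>y\<in>intv S x z. a ^ r x y * f x y * (a ^ r y z * g y z)) = (\<Sum>y\<in>intv S x z. a ^ r x z * (f x y * g y z))"
    proof (rule sum.cong)
      fix y assume y: "y \<in> intv S x z"
      have "r x z = r x y + r y z" using y True by (intro add) (auto simp: intv_def rel_def)
      thus "a ^ r x y * f x y * (a ^ r y z * g y z) = a ^ r x z * (f x y * g y z)"
        by (simp add: power_add algebra_simps)
    qed simp
    thus ?thesis using True by (simp add: conv_def dsc_def sum_distrib_left)
  qed
qed

lemma dsc_delta:
  assumes "\<And>x. x \<in> S \<Longrightarrow> r x x = 0"
  shows "dsc r a (delta S) = delta S"
  using assms by (auto simp: dsc_def delta_def intro!: ext)

lemma conv_I_rho:
  assumes "f \<in> I_rho S rho" "g \<in> I_rho S rho"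
    and add: "\<And>x y z. rel S x y \<Longrightarrow> rel S y z \<Longrightarrow> rho x z = rho x y + rho y z"
    and fin: "finite S"
  shows "conv S f g \<in> I_rho S rho"
  unfolding I_rho_def
proof (intro CollectI conjI allI impI conv_incalg)
  fix x z assume xz: "rel S x z"
  have "degree (\<Sum>y\<in>intv S x z. f x y * g y z) \<le> rho x z"
  proof (rule degree_sum_le)
    show "finite (intv S x z)" using fin by (rule intv_finite)
  next
    fix y assume y: "y \<in> intv S x z"
    have r1: "rel S x y" "rel S y z" using y xz by (auto simp: intv_def rel_def)
    have "degree (f x y * g y z) \<le> degree (f x y) + degree (g y z)" by (rule degree_mult_le)
    also have "\<dots> \<le> rho x y + rho y z" using assms(1,2) r1 by (intro add_mono) (auto simp: I_rho_def)
    finally show "degree (f x y * g y z) \<le> rho x z" using add[OF r1] by simp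
  qed
  thus "degree (conv S f g x z) \<le> rho x z" using xz by (simp add: conv_def)
qed

lemma bar_conv:
  assumes "f \<in> I_rho S rho" "g \<in> I_rho S rho"
    and add: "\<And>x y z. rel S x y \<Longrightarrow> rel S y z \<Longrightarrow> rho x z = rho x y + rho y z"
  shows "bar S rho (conv S f g) = conv S (bar S rho f) (bar S rho g)"
proof (intro ext)
  fix x z
  show "bar S rho (conv S f g) x z = conv S (bar S rho f) (bar S rho g) x z"
  proof (cases "rel S x z")
    case False thus ?thesis by (simp add: conv_def bar_def)
  next
    case True
    have "bar_poly (rho x z) (\<Sum>y\<in>intv S x z. f x y * g y z) = (\<Sum>y\<in>intv S x z. bar_poly (rho x z) (f x y * g y z))"
      by (rule bar_poly_sum)
    also have "\<dots> = (\<Sum>y\<in>intv S x z. bar S rho f x y * bar S rho g y z)"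
    proof (rule sum.cong)
      fix y assume y: "y \<in> intv S x z"
      have r1: "rel S x y" "rel S y z" using y True by (auto simp: intv_def rel_def)
      have "bar_poly (rho x y + rho y z) (f x y * g y z) = bar_poly (rho x y) (f x y) * bar_poly (rho y z) (g y z)"
        using assms(1,2) r1 by (intro bar_poly_mult) (auto simp: I_rho_def)
      thus "bar_poly (rho x z) (f x y * g y z) = bar S rho f x y * bar S rho g y z"
        using add[OF r1] r1 by (simp add: bar_def)
    qed simp
    finally show ?thesis using True by (simp add: conv_def bar_def)
  qed
qed

lemma dsc_I_rho:
  assumes "degree (a :: int poly) \<le> 2" "f \<in> incalg S" "\<And>x y. degree (f x y) = 0"
  shows "dsc r a f \<in> I_rho S (\<lambda>x y. 2 * r x y)"
  unfolding I_rho_def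
proof (intro CollectI conjI allI impI dsc_incalg assms(2))
  fix x y
  have "degree (a ^ r x y * f x y) \<le> degree (a ^ r x y) + degree (f x y)" by (rule degree_mult_le)
  also have "\<dots> \<le> r x y * degree a" using assms(3) degree_power_le[of a "r x y"] by (simp add: mult.commute)
  also have "\<dots> \<le> 2 * r x y" using assms(1) by simp
  finally show "degree (dsc r a f x y) \<le> 2 * r x y" by (simp add: dsc_def)
qed

lemma bar_dsc:
  assumes "degree (a :: int poly) \<le> 2" "f \<in> incalg S" "\<And>x y. degree (f x y) = 0"
  shows "bar S (\<lambda>x y. 2 * r x y) (dsc r a f) = dsc r (bar_poly 2 a) f"
proof (intro ext)
  fix x y
  show "bar S (\<lambda>x y. 2 * r x y) (dsc r a f) x y = dsc r (bar_poly 2 a) f x y"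
  proof (cases "rel S x y")
    case False thus ?thesis using assms(2) by (simp add: bar_def dsc_def incalg_def)
  next
    case True
    have "bar_poly (2 * r x y + 0) (a ^ r x y * f x y) = bar_poly (2 * r x y) (a ^ r x y) * bar_poly 0 (f x y)"
      by (rule bar_poly_mult) (use assms in \<open>auto intro: order.trans[OF degree_power_le]\<close>)
    also have "\<dots> = bar_poly 2 a ^ r x y * f x y"
      using bar_poly_power[OF assms(1), of "r x y"] bar_poly_0_const[OF assms(3)] by simp
    finally show ?thesis using True by (simp add: bar_def dsc_def)
  qed
qed

lemma KLS_unique:
  assumes fin: "finite S"
    and add: "\<And>x y z. rel S x y \<Longrightarrow> rel S y z \<Longrightarrow> rho x z = rho x y + rho y z"
    and pos: "\<And>x y. rel S x y \<Longrightarrow> x \<noteq> y \<Longrightarrow> 0 < rho x y"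
    and k1: "\<And>x. x \<in> S \<Longrightarrow> \<kappa> x x = 1"
    and g: "g \<in> I_half S rho" "bar S rho g = conv S g \<kappa>"
    and g': "g' \<in> I_half S rho" "bar S rho g' = conv S g' \<kappa>"
  shows "g' = g"
proof (intro ext)
  fix x y
  show "g' x y = g x y"
  proof (cases "rel S x y")
    case False thus ?thesis using g(1) g'(1) by (simp add: I_half_def I_rho_def incalg_def)
  next
    case True
    show ?thesis using True
    proof (induction y rule: measure_induct_rule[of "\<lambda>y. rho x y"])
      case (less y)
      show ?case
      proof (cases "x = y")
        case True thus ?thesis using g(1) g'(1) less.prems by (simp add: I_half_def rel_def)
      next
        case False
        let ?A = "intv S x y - {y}"
        have fA: "finite ?A" using fin by (simp add: intv_finite)
        have eqA: "(\<Sum>z\<in>?A. g x z * \<kappa> z y) = (\<Sum>z\<in>?A. g' x z * \<kappa> z y)"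
        proof (rule sum.cong)
          fix z assume z: "z \<in> ?A"
          have r1: "rel S x z" "rel S z y" using z less.prems by (auto simp: intv_def rel_def)
          have "z \<noteq> y" using z by simp
          hence "rho x z < rho x y" using add[OF r1] pos[OF r1(2)] by simp
          hence "g' x z = g x z" using less.IH r1(1) by blast
          thus "g x z * \<kappa> z y = g' x z * \<kappa> z y" by simp
        qed simp
        have ky: "\<kappa> y y = 1" using less.prems k1 by (simp add: rel_def)
        have e1: "bar_poly (rho x y) (g x y) = g x y + (\<Sum>z\<in>?A. g x z * \<kappa> z y)"
        proof -
          have "bar_poly (rho x y) (g x y) = bar S rho g x y" using less.prems by (simp add: bar_def)
          also have "\<dots> = conv S g \<kappa> x y" by (rule fun_cong[OF fun_cong[OF g(2)]])
          also have "\<dots> = (\<Sum>z\<in>intv S x y. g x z * \<kappa> z y)" using less.prems by (simp add: conv_def)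
          also have "\<dots> = g x y * \<kappa> y y + (\<Sum>z\<in>?A. g x z * \<kappa> z y)"
            by (rule sum.remove) (use fin less.prems in \<open>auto simp: intv_finite intv_def rel_def\<close>)
          also have "\<dots> = g x y + (\<Sum>z\<in>?A. g x z * \<kappa> z y)" using ky by simp
          finally show ?thesis .
        qed
        have e2: "bar_poly (rho x y) (g' x y) = g' x y + (\<Sum>z\<in>?A. g' x z * \<kappa> z y)"
        proof -
          have "bar_poly (rho x y) (g' x y) = bar S rho g' x y" using less.prems by (simp add: bar_def)
          also have "\<dots> = conv S g' \<kappa> x y" by (rule fun_cong[OF fun_cong[OF g'(2)]])
          also have "\<dots> = (\<Sum>z\<in>intv S x y. g' x z * \<kappa> z y)" using less.prems by (simp add: conv_def)
          also have "\<dots> = g' x y * \<kappa> y y + (\<Sum>z\<in>?A. g' x z * \<kappa> z y)"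
            by (rule sum.remove) (use fin less.prems in \<open>auto simp: intv_finite intv_def rel_def\<close>)
          also have "\<dots> = g' x y + (\<Sum>z\<in>?A. g' x z * \<kappa> z y)" using ky by simp
          finally show ?thesis .
        qed
        define d where "d = g x y - g' x y"
        have bd: "bar_poly (rho x y) d = d" using e1 e2 eqA by (simp add: d_def bar_poly_diff)
        have dg: "2 * degree (g x y) < rho x y" "2 * degree (g' x y) < rho x y"
          using g(1) g'(1) less.prems False by (auto simp: I_half_def)
        have dd: "2 * degree d < rho x y"
          using degree_diff_le_max[of "g x y" "g' x y"] dg unfolding d_def by linarith
        have "d = 0"
        proof (rule poly_eqI)
          fix i
          show "coeff d i = coeff 0 i"
          proof (cases "i \<le> degree d")
            case False thus ?thesis by (simp add: coeff_eq_0)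
          next
            case True
            have "coeff d i = coeff (bar_poly (rho x y) d) i" using bd by simp
            also have "\<dots> = 0" using True dd by (simp add: coeff_bar_poly coeff_eq_0)
            finally show ?thesis by simp
          qed
        qed
        thus ?thesis by (simp add: d_def)
      qed
    qed
  qed
qed




lemma pcompose_pow: "pcompose (p ^ n) q = (pcompose p q) ^ n" for p q :: "'c::comm_ring_1 poly"
  by (induction n) (simp_all add: pcompose_1 pcompose_mult)

lemma deg_less_aux:
  assumes "degree (p :: int poly) \<le> n" "coeff p n = 0" "0 < n"
  shows "degree p < n"
proof (rule ccontr)
  assume "\<not> degree p < n"
  hence "degree p = n" using assms(1) by simp
  hence "p = 0" using assms(2) by (metis leading_coeff_0_iff)
  thus False using \<open>degree p = n\<close> assms(3) by simp
qed

locale mat =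
  fixes E :: "'a set" and indep :: "'a set \<Rightarrow> bool"
  assumes M: "matroid E indep"
begin

abbreviation "S \<equiv> flats E indep"
abbreviation "r \<equiv> rr indep"

lemma finE: "finite E" using M by (simp add: matroid_def)
lemma indep_sub: "indep I \<Longrightarrow> I \<subseteq> E" using M by (simp add: matroid_def)

lemma mrank_mono:
  assumes "X \<subseteq> Y"
  shows "mrank indep X \<le> mrank indep Y"
  unfolding mrank_def
proof (rule Max_mono)
  show "card ` {I. I \<subseteq> X \<and> indep I} \<subseteq> card ` {I. I \<subseteq> Y \<and> indep I}" using assms by auto
  show "card ` {I. I \<subseteq> X \<and> indep I} \<noteq> {}" using M by (auto simp: matroid_def)
  have "{I. I \<subseteq> Y \<and> indep I} \<subseteq> Pow E" using indep_sub by auto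
  hence "finite {I. I \<subseteq> Y \<and> indep I}" using finE by (meson finite_Pow_iff finite_subset)
  thus "finite (card ` {I. I \<subseteq> Y \<and> indep I})" by simp
qed

lemma finS: "finite S"
proof -
  have "S \<subseteq> Pow E" by (auto simp: flats_def)
  thus ?thesis using finE by (meson finite_Pow_iff finite_subset)
qed

lemma finF: "\<forall>y\<in>S. finite y"
  using finE by (auto simp: flats_def intro: finite_subset)

lemma r_add: "rel S x y \<Longrightarrow> rel S y z \<Longrightarrow> r x z = r x y + r y z"
  using mrank_mono[of x y] mrank_mono[of y z] by (auto simp: rel_def rr_def)

lemma r2_add: "rel S x y \<Longrightarrow> rel S y z \<Longrightarrow> 2 * r x z = 2 * r x y + 2 * r y z"
  using r_add by simp

lemma r_refl: "x \<in> S \<Longrightarrow> r x x = 0" by (simp add: rr_def)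

lemma r_pos:
  assumes "rel S x y" "x \<noteq> y"
  shows "0 < r x y"
proof -
  obtain e where e: "e \<in> y" "e \<notin> x" using assms by (auto simp: rel_def)
  have "e \<in> E" using e assms by (auto simp: rel_def flats_def)
  hence "mrank indep x < mrank indep (insert e x)" using assms e by (auto simp: rel_def flats_def)
  also have "\<dots> \<le> mrank indep y" using assms e by (intro mrank_mono) (auto simp: rel_def)
  finally show ?thesis by (simp add: rr_def)
qed

lemma mob_eq: "mobius S = (mlf S :: _ \<Rightarrow> _ \<Rightarrow> int poly)"
  by (rule mobius_eq[OF finS finF])

lemma mob_incalg: "(mobius S :: _ \<Rightarrow> _ \<Rightarrow> int poly) \<in> incalg S"
  by (simp add: mob_eq mlf_incalg)

lemma mob_deg: "degree ((mobius S :: _ \<Rightarrow> _ \<Rightarrow> int poly) x y) = 0"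
  by (simp add: mob_eq mlf_def of_int_poly)

lemma zeta_deg: "degree ((zeta S :: _ \<Rightarrow> _ \<Rightarrow> int poly) x y) = 0"
  by (simp add: zeta_def)

lemma mob_diag: "x \<in> S \<Longrightarrow> (mobius S :: _ \<Rightarrow> _ \<Rightarrow> int poly) x x = 1"
  by (simp add: mob_eq mlf_def rel_def mul.simps)

abbreviation Z :: "int poly \<Rightarrow> 'a set \<Rightarrow> 'a set \<Rightarrow> int poly" where
  "Z a \<equiv> dsc r a (zeta S)"
abbreviation MM :: "int poly \<Rightarrow> 'a set \<Rightarrow> 'a set \<Rightarrow> int poly" where
  "MM a \<equiv> dsc r a (mobius S)"

lemma ZM: "conv S (Z a) (MM a) = delta S"
  by (simp add: conv_dsc r_add mobius_right[OF finS finF] dsc_delta r_refl)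

lemma MZ: "conv S (MM a) (Z a) = delta S"
  by (simp add: conv_dsc r_add mobius_left[OF finS finF] dsc_delta r_refl)

lemma Z_incalg: "Z a \<in> incalg S" by (simp add: dsc_incalg zeta_incalg)
lemma M_incalg: "MM a \<in> incalg S" by (simp add: dsc_incalg mob_incalg)

lemma sandwich: "conv S (conv S (MM a) (Z b)) (conv S (MM b) (Z c)) = conv S (MM a) (Z c)"
proof -
  have "conv S (conv S (MM a) (Z b)) (conv S (MM b) (Z c)) = conv S (MM a) (conv S (conv S (Z b) (MM b)) (Z c))"
    by (simp add: conv_assoc finS)
  also have "\<dots> = conv S (MM a) (Z c)" by (simp add: ZM conv_delta_left Z_incalg finS)
  finally show ?thesis .
qed

lemma Z_I: "degree a \<le> 2 \<Longrightarrow> Z a \<in> I_rho S (\<lambda>x y. 2 * r x y)"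
  by (rule dsc_I_rho) (auto simp: zeta_incalg zeta_deg)
lemma M_I: "degree a \<le> 2 \<Longrightarrow> MM a \<in> I_rho S (\<lambda>x y. 2 * r x y)"
  by (rule dsc_I_rho) (auto simp: mob_incalg mob_deg)
lemma Z_bar: "degree a \<le> 2 \<Longrightarrow> bar S (\<lambda>x y. 2 * r x y) (Z a) = Z (bar_poly 2 a)"
  by (rule bar_dsc) (auto simp: zeta_incalg zeta_deg)
lemma M_bar: "degree a \<le> 2 \<Longrightarrow> bar S (\<lambda>x y. 2 * r x y) (MM a) = MM (bar_poly 2 a)"
  by (rule bar_dsc) (auto simp: mob_incalg mob_deg)

lemma MZ_I: "degree a \<le> 2 \<Longrightarrow> degree b \<le> 2 \<Longrightarrow> conv S (MM a) (Z b) \<in> I_rho S (\<lambda>x y. 2 * r x y)"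
  by (rule conv_I_rho[OF M_I Z_I r2_add finS])

lemma MZ_bar: "degree a \<le> 2 \<Longrightarrow> degree b \<le> 2 \<Longrightarrow>
   bar S (\<lambda>x y. 2 * r x y) (conv S (MM a) (Z b)) = conv S (MM (bar_poly 2 a)) (Z (bar_poly 2 b))"
  by (simp add: bar_conv[OF M_I Z_I r2_add] M_bar Z_bar)

lemma MZ_diag: "x \<in> S \<Longrightarrow> conv S (MM a) (Z b) x x = 1"
proof -
  assume x: "x \<in> S"
  have "intv S x x = {x}" using x by (auto simp: intv_def)
  thus ?thesis using x by (simp add: conv_def rel_def dsc_def mob_diag r_refl zeta_def)
qed

end




lemma pe1: "[:-1,1:] * -1 = ([:1,-1:] :: int poly)" by simp
lemma pe2: "[:-1,1:] * [:0,1:] = ([:0,-1,1:] :: int poly)" by (simp add: mult_pCons_left)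

context mat begin

lemma mob_rel: "rel S x y \<Longrightarrow> (mobius S :: _ \<Rightarrow> _ \<Rightarrow> int poly) x y = of_int (mul S x y)"
  by (simp add: mob_eq mlf_def)

lemma chi_eq: "rel S G H \<Longrightarrow> chi E indep G H = conv S (mobius S) (Z [:0,1:]) G H"
  unfolding chi_def conv_def
  by (auto simp: dsc_def zeta_def intv_def rel_def intro!: sum.cong)

lemma chi_m1:
  assumes "rel S F G"
  shows "[: (-1) ^ r F G * poly (chi E indep F G) (-1) :] = dsc r (-1) (conv S (mobius S) (Z (-1))) F G"
proof -
  have "poly (chi E indep F G) (-1) = (\<Sum>H\<in>intv S F G. of_int (mul S F H) * (-1) ^ r H G)"
    unfolding chi_def poly_sum
    by (intro sum.cong refl) (use assms in \<open>auto simp: intv_def rel_def mob_rel\<close>)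
  moreover have "conv S (mobius S) (Z (-1)) F G = (\<Sum>H\<in>intv S F G. of_int (mul S F H) * (-1) ^ r H G)"
    using assms unfolding conv_def
    by (auto simp: dsc_def zeta_def intv_def rel_def mob_rel intro!: sum.cong)
  moreover have cint: "\<And>x. [: x :] = (of_int x :: int poly)" by (simp add: of_int_poly)
  ultimately show ?thesis
    by (simp only: dsc_def cint of_int_mult of_int_sum of_int_power of_int_minus of_int_1 of_int_eq_id id_apply)
qed

lemma kappa_eq: "kappaM E indep = conv S (MM [:1,-1:]) (Z [:0,-1,1:])"
proof -
  define A where "A = dsc r (-1) (conv S (mobius S) (Z (-1)))"
  define B where "B = conv S (mobius S) (Z [:0,1:])"
  have k: "kappaM E indep = dsc r [:-1,1:] (conv S A B)"
  proof (intro ext)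
    fix F H
    show "kappaM E indep F H = dsc r [:-1,1:] (conv S A B) F H"
    proof (cases "rel S F H")
      case False thus ?thesis by (simp add: kappaM_def dsc_def conv_def)
    next
      case True
      have "(\<Sum>G\<in>intv S F H. smult ((-1) ^ r F G * poly (chi E indep F G) (-1)) (chi E indep G H))
          = (\<Sum>G\<in>intv S F H. A F G * B G H)"
      proof (rule sum.cong)
        fix G assume G: "G \<in> intv S F H"
        have r1: "rel S F G" "rel S G H" using G True by (auto simp: intv_def rel_def)
        show "smult ((-1) ^ r F G * poly (chi E indep F G) (-1)) (chi E indep G H) = A F G * B G H"
        proof -
          have e: "[: (-1) ^ r F G * poly (chi E indep F G) (-1) :] = A F G"
            using chi_m1[OF r1(1)] unfolding A_def .
          show ?thesis by (simp add: e[symmetric] chi_eq[OF r1(2)] B_def)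
        qed
      qed simp
      thus ?thesis using True by (simp add: kappaM_def dsc_def conv_def)
    qed
  qed
  have z: "dsc r (-1) (Z (-1)) = zeta S"
  proof -
    have e: "(-1) * (-1) = (1 :: int poly)" by simp
    have "dsc r (-1) (Z (-1)) = Z ((-1) * (-1))" by (rule dsc_dsc)
    thus ?thesis by (simp only: e dsc_one)
  qed
  have "A = conv S (MM (-1)) (dsc r (-1) (Z (-1)))"
    unfolding A_def by (rule conv_dsc[symmetric]) (rule r_add)
  hence A': "A = conv S (MM (-1)) (zeta S)" by (simp only: z)
  have "conv S A B = conv S (conv S (MM (-1)) (zeta S)) (conv S (mobius S) (Z [:0,1:]))"
    unfolding B_def A' by (rule refl)
  also have "\<dots> = conv S (MM (-1)) (conv S (conv S (zeta S) (mobius S)) (Z [:0,1:]))"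
    by (simp only: conv_assoc[OF finS])
  also have "\<dots> = conv S (MM (-1)) (Z [:0,1:])"
    by (simp only: mobius_right[OF finS finF] conv_delta_left[OF Z_incalg finS])
  finally have "kappaM E indep = dsc r [:-1,1:] (conv S (MM (-1)) (Z [:0,1:]))" using k by (simp only:)
  also have "\<dots> = conv S (dsc r [:-1,1:] (MM (-1))) (dsc r [:-1,1:] (Z [:0,1:]))"
    by (rule conv_dsc[symmetric, OF r_add])
  also have "\<dots> = conv S (MM ([:-1,1:] * -1)) (Z ([:-1,1:] * [:0,1:]))" by (simp only: dsc_dsc)
  also have "\<dots> = conv S (MM [:1,-1:]) (Z [:0,-1,1:])" by (simp only: pe1 pe2)
  finally show ?thesis .
qed

end




lemma pcX: "pcompose [:0,1:] q = (q :: int poly)" by (simp add: pcompose_pCons)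
lemma pco: "pcompose (of_int k) q = (of_int k :: int poly)" by (simp add: of_int_poly)

lemma smult_sum2: "smult c (sum f A) = (\<Sum>i\<in>A. smult c (f i))"
  using sum_distrib_left[of "[:c:]" f A] by simp

context mat begin

lemma hbc_term:
  fixes k :: int and a b :: nat
  shows "smult ((-1) ^ (a + b)) (smult k ([:0,1:] ^ a) * [:-1,1:] ^ b)
     = [:0,-1:] ^ a * of_int k * ([:1,-1:] ^ b * (1::int poly))"
proof -
  have e1: "[:0,-1:] = smult (-1) [:0,1::int:]" by simp
  have e2: "[:1,-1:] = smult (-1) [:-1,1::int:]" by simp
  show ?thesis
    by (simp only: e1 e2 smult_power) (simp add: of_int_poly power_add mult_ac)
qed

lemma hbc_eq: "hbc E indep = conv S (MM [:0,-1:]) (Z [:1,-1:])"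
proof (intro ext)
  fix F G
  show "hbc E indep F G = conv S (MM [:0,-1:]) (Z [:1,-1:]) F G"
  proof (cases "rel S F G")
    case False thus ?thesis by (simp add: hbc_def conv_def)
  next
    case True
    have pc: "pcompose (chi E indep F G) [:1,-1:] = (\<Sum>H\<in>intv S F G. of_int (mul S F H) * [:1,-1:] ^ r H G)"
      unfolding chi_def pcompose_sum
    proof (rule sum.cong)
      fix H assume H: "H \<in> intv S F G"
      have "rel S F H" using H True by (auto simp: intv_def rel_def)
      hence mr: "mobius S F H = (of_int (mul S F H) :: int poly)" by (rule mob_rel)
      show "pcompose (mobius S F H * [:0, 1:] ^ r H G) [:1, - 1:] = (of_int (mul S F H) * [:1, - 1:] ^ r H G :: int poly)"
        by (simp only: mr pcompose_mult pcompose_pow pcX pco)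
    qed simp
    have "hbc E indep F G = smult ((-1) ^ r F G) (\<Sum>H\<in>intv S F G. bar_poly (r F G) (of_int (mul S F H) * [:1,-1:] ^ r H G))"
      using True by (simp add: hbc_def pc bar_poly_sum)
    also have "\<dots> = (\<Sum>H\<in>intv S F G. MM [:0,-1:] F H * Z [:1,-1:] H G)"
      unfolding smult_sum2
    proof (rule sum.cong)
      fix H assume H: "H \<in> intv S F G"
      have r1: "rel S F H" "rel S H G" using H True by (auto simp: intv_def rel_def)
      have ra: "r F G = r F H + r H G" by (rule r_add[OF r1])
      have dq: "degree ([:1,-1:] :: int poly) \<le> 1" by simp
      have "bar_poly (r F H + 1 * r H G) (of_int (mul S F H) * [:1,-1:] ^ r H G :: int poly)
          = bar_poly (r F H) (of_int (mul S F H)) * bar_poly (1 * r H G) ([:1,-1:] ^ r H G)"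
        by (rule bar_poly_mult) (auto simp: of_int_poly intro: order.trans[OF degree_power_le])
      also have "\<dots> = smult (mul S F H) ([:0,1:] ^ r F H) * [:-1,1:] ^ r H G"
        by (simp only: bar_poly_power[OF dq] bp4) (simp add: of_int_poly bar_poly_const)
      finally have bp: "bar_poly (r F G) (of_int (mul S F H) * [:1,-1:] ^ r H G :: int poly)
          = smult (mul S F H) ([:0,1:] ^ r F H) * [:-1,1:] ^ r H G" using ra by simp
      show "smult ((-1) ^ r F G) (bar_poly (r F G) (of_int (mul S F H) * [:1,-1:] ^ r H G))
          = MM [:0,-1:] F H * Z [:1,-1:] H G"
      proof -
        have "smult ((-1) ^ r F G) (bar_poly (r F G) (of_int (mul S F H) * [:1,-1:] ^ r H G))
           = smult ((-1) ^ (r F H + r H G)) (smult (mul S F H) ([:0,1:] ^ r F H) * [:-1,1:] ^ r H G)"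
          by (subst bp) (simp only: ra)
        also have "\<dots> = [:0,-1:] ^ r F H * of_int (mul S F H) * ([:1,-1:] ^ r H G * (1::int poly))"
          by (rule hbc_term)
        also have "\<dots> = MM [:0,-1:] F H * Z [:1,-1:] H G"
          using r1 by (simp add: dsc_def mob_rel zeta_def)
        finally show ?thesis .
      qed
    qed simp
    also have "\<dots> = conv S (MM [:0,-1:]) (Z [:1,-1:]) F G" using True by (simp add: conv_def)
    finally show ?thesis .
  qed
qed

end




context mat begin

lemma hbc_deg:
  assumes "rel S F G" "F \<noteq> G"
  shows "2 * degree (hbc E indep F G) < 2 * r F G"
proof -
  let ?p = "pcompose (chi E indep F G) [:1,-1:]"
  have h: "hbc E indep F G = smult ((-1) ^ r F G) (bar_poly (r F G) ?p)"
    using assms by (simp add: hbc_def)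
  have d: "degree (hbc E indep F G) \<le> r F G"
    unfolding h by (rule order.trans[OF degree_smult_le degree_bar_poly])
  have sum0: "(\<Sum>H\<in>intv S F G. (mobius S F H :: int poly)) = 0"
  proof -
    have "(\<Sum>H\<in>intv S F G. (mobius S F H :: int poly)) = conv S (mobius S) (zeta S) F G"
      using assms(1) by (auto simp: conv_def zeta_def intv_def rel_def intro!: sum.cong)
    also have "\<dots> = delta S F G" by (simp add: mobius_left[OF finS finF])
    also have "\<dots> = 0" using assms by (simp add: delta_def)
    finally show ?thesis .
  qed
  have "poly (chi E indep F G) 1 = poly (\<Sum>H\<in>intv S F G. (mobius S F H :: int poly)) 1"
    by (simp add: chi_def poly_sum)
  hence c1: "poly (chi E indep F G) 1 = 0" using sum0 by simp
  have "coeff (hbc E indep F G) (r F G) = (-1) ^ r F G * coeff ?p 0"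
    unfolding h by (simp add: coeff_bar_poly)
  also have "coeff ?p 0 = poly (chi E indep F G) 1"
    by (simp add: poly_0_coeff_0[symmetric] poly_pcompose)
  finally have "coeff (hbc E indep F G) (r F G) = 0" using c1 by simp
  hence "degree (hbc E indep F G) < r F G"
    using deg_less_aux[OF d] r_pos[OF assms] by blast
  thus ?thesis by simp
qed

lemma hbc_half: "hbc E indep \<in> I_half S (\<lambda>x y. 2 * r x y)"
  unfolding I_half_def
proof (intro CollectI conjI ballI allI impI)
  show "hbc E indep \<in> I_rho S (\<lambda>x y. 2 * r x y)" unfolding hbc_eq by (rule MZ_I) simp_all
next
  fix x assume "x \<in> S" thus "hbc E indep x x = 1" unfolding hbc_eq by (rule MZ_diag)
next
  fix x y assume "rel S x y \<and> x \<noteq> y"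
  thus "2 * degree (hbc E indep x y) < 2 * r x y" using hbc_deg by blast
qed

lemma main:
  "is_kernel S (\<lambda>F G. 2 * r F G) (kappaM E indep)
   \<and> is_left_KLS S (\<lambda>F G. 2 * r F G) (kappaM E indep) (hbc E indep)"
proof -
  let ?a = "[:1,-1:] :: int poly"
  let ?b = "[:0,-1,1:] :: int poly"
  let ?c = "[:0,-1:] :: int poly"
  have da: "degree ?a \<le> 2" and db: "degree ?b \<le> 2" and dc: "degree ?c \<le> 2" by simp_all
  have bk: "bar S (\<lambda>F G. 2 * r F G) (kappaM E indep) = conv S (MM ?b) (Z ?a)"
    unfolding kappa_eq by (simp only: MZ_bar[OF da db] bp1 bp2)
  have bh: "bar S (\<lambda>F G. 2 * r F G) (hbc E indep) = conv S (MM ?c) (Z ?b)"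
    unfolding hbc_eq by (simp only: MZ_bar[OF dc da] bp1 bp3)
  have K: "is_kernel S (\<lambda>F G. 2 * r F G) (kappaM E indep)"
    unfolding is_kernel_def
  proof (intro conjI ballI)
    show "kappaM E indep \<in> I_rho S (\<lambda>F G. 2 * r F G)" unfolding kappa_eq by (rule MZ_I[OF da db])
  next
    fix x assume "x \<in> S" thus "kappaM E indep x x = 1" unfolding kappa_eq by (rule MZ_diag)
  next
    show "conv S (kappaM E indep) (bar S (\<lambda>F G. 2 * r F G) (kappaM E indep)) = delta S"
      unfolding bk unfolding kappa_eq by (simp only: sandwich MZ)
  next
    show "conv S (bar S (\<lambda>F G. 2 * r F G) (kappaM E indep)) (kappaM E indep) = delta S"
      unfolding bk unfolding kappa_eq by (simp only: sandwich MZ)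
  qed
  have eqn: "bar S (\<lambda>F G. 2 * r F G) (hbc E indep) = conv S (hbc E indep) (kappaM E indep)"
    unfolding bh unfolding hbc_eq kappa_eq by (simp only: sandwich)
  have L: "is_left_KLS S (\<lambda>F G. 2 * r F G) (kappaM E indep) (hbc E indep)"
    unfolding is_left_KLS_def
  proof (intro conjI allI impI)
    show "hbc E indep \<in> I_half S (\<lambda>x y. 2 * r x y)" by (rule hbc_half)
    show "bar S (\<lambda>F G. 2 * r F G) (hbc E indep) = conv S (hbc E indep) (kappaM E indep)" by (rule eqn)
  next
    fix g' assume g': "g' \<in> I_half S (\<lambda>F G. 2 * r F G) \<and> bar S (\<lambda>F G. 2 * r F G) g' = conv S g' (kappaM E indep)"
    show "g' = hbc E indep"
    proof (rule KLS_unique[where \<kappa>="kappaM E indep" and rho="\<lambda>x y. 2 * r x y", OF finS])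
      show "\<And>x y z. rel S x y \<Longrightarrow> rel S y z \<Longrightarrow> 2 * r x z = 2 * r x y + 2 * r y z" by (rule r2_add)
      show "\<And>x y. rel S x y \<Longrightarrow> x \<noteq> y \<Longrightarrow> 0 < 2 * r x y" using r_pos by simp
      show "\<And>x. x \<in> S \<Longrightarrow> kappaM E indep x x = 1" unfolding kappa_eq by (rule MZ_diag)
      show "hbc E indep \<in> I_half S (\<lambda>x y. 2 * r x y)" by (rule hbc_half)
      show "bar S (\<lambda>x y. 2 * r x y) (hbc E indep) = conv S (hbc E indep) (kappaM E indep)" by (rule eqn)
      show "g' \<in> I_half S (\<lambda>x y. 2 * r x y)" using g' by simp
      show "bar S (\<lambda>x y. 2 * r x y) g' = conv S g' (kappaM E indep)" using g' by simp
    qed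
  qed
  show ?thesis using K L by blast
qed

end

theorem proposition2p17:
  fixes E :: "'a set" and indep :: "'a set \<Rightarrow> bool"
  assumes "matroid E indep"
  shows "is_kernel (flats E indep) (\<lambda>F G. 2 * rr indep F G) (kappaM E indep)
       \<and> is_left_KLS (flats E indep) (\<lambda>F G. 2 * rr indep F G) (kappaM E indep) (hbc E indep)"
  using mat.main[OF mat.intro[OF assms]] .


end
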